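(* Let $X$ be a topological space, for each $x\in X$ let $\mathcal B_x$ be a local base at $x$, and let $A$ be a finitely non-Hausdorff subset of $X$. Then $\bigcap_{x\in A}\bigcap\{\overline{B}:B\in\mathcal B_x\}=\bigcap_{x\in A}\bigcup\{M: M$ is a finitely non-Hausdorff subset of $X$ with $x\in M\}$, and this set also equals $\bigcap_{x\in A}\bigcup\{M: M$ is a maximal finitely non-Hausdorff subset of $X$ with $x\in M\}$.
   Context: A non-empty subset $A$ of a topological space $X$ is called finitely non-Hausdorff if for every non-empty finite subset $F\subseteq A$ and every family $\{U_y:y\in F\}$ where each $U_y$ is an open neighborhood of $y$, we have $\bigcap_{y\in F}U_y\neq\emptyset$. It is maximal finitely non-Hausdorff if no finitely non-Hausdorff subset of $X$ properly contains it. *)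

theory Defs
  imports "HOL-Analysis.Analysis"
begin

definition finitely_non_hausdorff :: "'a topology \<Rightarrow> 'a set \<Rightarrow> bool" where
  "finitely_non_hausdorff X A \<longleftrightarrow>
     A \<noteq> {} \<and> A \<subseteq> topspace X \<and>
     (\<forall>F U. finite F \<and> F \<noteq> {} \<and> F \<subseteq> A \<and>
        (\<forall>y\<in>F. openin X (U y) \<and> y \<in> U y) \<longrightarrow> (\<Inter>y\<in>F. U y) \<noteq> {})"

definition maximal_finitely_non_hausdorff :: "'a topology \<Rightarrow> 'a set \<Rightarrow> bool" where
  "maximal_finitely_non_hausdorff X A \<longleftrightarrow>
     finitely_non_hausdorff X A \<and>
     (\<forall>M. finitely_non_hausdorff X M \<and> A \<subseteq> M \<longrightarrow> M = A)"

definition local_base :: "'a topology \<Rightarrow> 'a \<Rightarrow> 'a set set \<Rightarrow> bool" where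
  "local_base X x \<B> \<longleftrightarrow>
     (\<forall>B\<in>\<B>. openin X B \<and> x \<in> B) \<and>
     (\<forall>U. openin X U \<and> x \<in> U \<longrightarrow> (\<exists>B\<in>\<B>. B \<subseteq> U))"

end

theory Submission
  imports Defs
begin

lemma fnhD:
  assumes "finitely_non_hausdorff X M" "finite F" "F \<noteq> {}" "F \<subseteq> M"
    "\<forall>y\<in>F. openin X (U y) \<and> y \<in> U y"
  shows "(\<Inter>y\<in>F. U y) \<noteq> {}"
proof -
  have "\<forall>F U. finite F \<and> F \<noteq> {} \<and> F \<subseteq> M \<and> (\<forall>y\<in>F. openin X (U y) \<and> y \<in> U y) \<longrightarrow> (\<Inter>y\<in>F. U y) \<noteq> {}"
    using assms(1) unfolding finitely_non_hausdorff_def by (elim conjE)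
  then have "finite F \<and> F \<noteq> {} \<and> F \<subseteq> M \<and> (\<forall>y\<in>F. openin X (U y) \<and> y \<in> U y) \<longrightarrow> (\<Inter>y\<in>F. U y) \<noteq> {}"
    by (elim allE)
  then show ?thesis using assms(2-5) by simp
qed
lemma fnh_top: "finitely_non_hausdorff X M \<Longrightarrow> M \<subseteq> topspace X \<and> M \<noteq> {}"
  unfolding finitely_non_hausdorff_def by (elim conjE) simp
lemma fnh_subset:
  assumes "finitely_non_hausdorff X M" "S \<subseteq> M" "S \<noteq> {}"
  shows "finitely_non_hausdorff X S"
  unfolding finitely_non_hausdorff_def
proof (intro conjI allI impI)
  fix F U assume "finite F \<and> F \<noteq> {} \<and> F \<subseteq> S \<and> (\<forall>y\<in>F. openin X (U y) \<and> y \<in> U y)"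
  then show "(\<Inter>y\<in>F. U y) \<noteq> {}" using assms(2) by (intro fnhD[OF assms(1)]) auto
next
  show "S \<noteq> {}" by fact
  show "S \<subseteq> topspace X" using fnh_top[OF assms(1)] assms(2) by blast
qed

lemma fnh_pair:
  "finitely_non_hausdorff X {x,z} \<longleftrightarrow> x \<in> topspace X \<and> z \<in> topspace X \<and>
    (\<forall>U V. openin X U \<and> openin X V \<and> x \<in> U \<and> z \<in> V \<longrightarrow> U \<inter> V \<noteq> {})"
proof
  assume h: "finitely_non_hausdorff X {x,z}"
  have "U \<inter> V \<noteq> {}" if "openin X U" "openin X V" "x \<in> U" "z \<in> V" for U V
  proof (cases "x = z")
    case True then show ?thesis using that by blast
  next
    case False
    have "(\<Inter>y\<in>{x,z}. (\<lambda>y. if y = x then U else V) y) \<noteq> {}"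
      by (rule fnhD[OF h]) (use that in auto)
    then show ?thesis using False by auto
  qed
  then show "x \<in> topspace X \<and> z \<in> topspace X \<and>
    (\<forall>U V. openin X U \<and> openin X V \<and> x \<in> U \<and> z \<in> V \<longrightarrow> U \<inter> V \<noteq> {})"
    using fnh_top[OF h] by blast
next
  assume h: "x \<in> topspace X \<and> z \<in> topspace X \<and>
    (\<forall>U V. openin X U \<and> openin X V \<and> x \<in> U \<and> z \<in> V \<longrightarrow> U \<inter> V \<noteq> {})"
  show "finitely_non_hausdorff X {x,z}"
    unfolding finitely_non_hausdorff_def
  proof (intro conjI allI impI)
    fix F U
    assume F: "finite F \<and> F \<noteq> {} \<and> F \<subseteq> {x, z} \<and> (\<forall>y\<in>F. openin X (U y) \<and> y \<in> U y)"
    have Fs: "F \<subseteq> {x,z}" "F \<noteq> {}" and Uo: "\<forall>y\<in>F. openin X (U y) \<and> y \<in> U y"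
      using F by auto
    have hh: "\<And>U V. openin X U \<Longrightarrow> openin X V \<Longrightarrow> x \<in> U \<Longrightarrow> z \<in> V \<Longrightarrow> U \<inter> V \<noteq> {}"
      using h by blast
    show "(\<Inter>y\<in>F. U y) \<noteq> {}"
    proof (cases "x \<in> F \<and> z \<in> F")
      case True
      then have e: "F = {x,z}" using Fs by blast
      have "U x \<inter> U z \<noteq> {}" using True Uo by (intro hh) auto
      then show ?thesis using e by simp
    next
      case False
      then have "F = {x} \<or> F = {z}" using Fs by blast
      then show ?thesis using Uo by (elim disjE) auto
    qed
  next
    show "{x, z} \<noteq> {}" by simp
  next
    show "{x, z} \<subseteq> topspace X" using h by simp
  qed
qed

lemma fnh_extend:
  assumes "finitely_non_hausdorff X S"
  shows "\<exists>M. maximal_finitely_non_hausdorff X M \<and> S \<subseteq> M"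
proof -
  let ?A = "{M. finitely_non_hausdorff X M \<and> S \<subseteq> M}"
  have "\<exists>M\<in>?A. \<forall>N\<in>?A. M \<subseteq> N \<longrightarrow> N = M"
  proof (rule subset_Zorn_nonempty)
    show "?A \<noteq> {}" using assms by blast
  next
    fix C assume C: "C \<noteq> {}" "subset.chain ?A C"
    then have CA: "C \<subseteq> ?A" by (simp add: subset_chain_def)
    have "finitely_non_hausdorff X (\<Union>C)"
      unfolding finitely_non_hausdorff_def
    proof (intro conjI allI impI)
      show "\<Union>C \<noteq> {}" using C CA fnh_top[OF assms] by blast
      show "\<Union>C \<subseteq> topspace X" using CA fnh_top by blast
      fix F U
      assume F: "finite F \<and> F \<noteq> {} \<and> F \<subseteq> \<Union>C \<and> (\<forall>y\<in>F. openin X (U y) \<and> y \<in> U y)"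
      then obtain B where B: "B \<in> C" "F \<subseteq> B"
        using finite_subset_Union_chain[OF _ _ C(1) C(2), of F] by blast
      then have "finitely_non_hausdorff X B" using CA by blast
      then show "(\<Inter>y\<in>F. U y) \<noteq> {}" using F B by (intro fnhD[of X B]) auto
    qed
    moreover have "S \<subseteq> \<Union>C" using C CA by blast
    ultimately show "\<Union>C \<in> ?A" by blast
  qed
  then obtain M where M: "M \<in> ?A" "\<forall>N\<in>?A. M \<subseteq> N \<longrightarrow> N = M" by blast
  have "maximal_finitely_non_hausdorff X M"
    unfolding maximal_finitely_non_hausdorff_def using M(1) M(2)[rule_format] by blast
  then show ?thesis using M by blast
qed

theorem corollary2p10:
  fixes X :: "'a topology" and \<B> :: "'a \<Rightarrow> 'a set set" and A :: "'a set"
  assumes "\<And>x. x \<in> topspace X \<Longrightarrow> local_base X x (\<B> x)"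
    and "finitely_non_hausdorff X A"
  shows "(\<Inter>x\<in>A. \<Inter>B\<in>\<B> x. X closure_of B)
           = (\<Inter>x\<in>A. \<Union>{M. finitely_non_hausdorff X M \<and> x \<in> M}) \<and>
         (\<Inter>x\<in>A. \<Union>{M. finitely_non_hausdorff X M \<and> x \<in> M})
           = (\<Inter>x\<in>A. \<Union>{M. maximal_finitely_non_hausdorff X M \<and> x \<in> M})"
proof -
  have Ane: "A \<noteq> {}" and Atop: "A \<subseteq> topspace X"
    using fnh_top[OF assms(2)] by auto
  let ?P = "\<lambda>x z. x \<in> topspace X \<and> z \<in> topspace X \<and>
    (\<forall>U V. openin X U \<and> openin X V \<and> x \<in> U \<and> z \<in> V \<longrightarrow> U \<inter> V \<noteq> {})"
  have L: "z \<in> (\<Inter>B\<in>\<B> x. X closure_of B) \<longleftrightarrow> ?P x z" if x: "x \<in> A" for x z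
  proof -
    have lb: "local_base X x (\<B> x)" using assms(1) Atop x by blast
    have lb1: "\<And>B. B \<in> \<B> x \<Longrightarrow> openin X B \<and> x \<in> B"
      using lb unfolding local_base_def by blast
    have lb2: "\<And>U. openin X U \<Longrightarrow> x \<in> U \<Longrightarrow> \<exists>B\<in>\<B> x. B \<subseteq> U"
      using lb unfolding local_base_def by blast
    show ?thesis
    proof
      assume z: "z \<in> (\<Inter>B\<in>\<B> x. X closure_of B)"
      have zc: "\<And>B. B \<in> \<B> x \<Longrightarrow> z \<in> X closure_of B" using z by blast
      obtain B0 where "B0 \<in> \<B> x" using lb2[of "topspace X"] Atop x by auto
      then have "z \<in> X closure_of B0" by (rule zc)
      then have zt: "z \<in> topspace X" by (rule subsetD[OF closure_of_subset_topspace])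
      have "U \<inter> V \<noteq> {}" if UV: "openin X U" "openin X V" "x \<in> U" "z \<in> V" for U V
      proof -
        have "\<exists>B\<in>\<B> x. B \<subseteq> U" by (rule lb2[OF UV(1) UV(3)])
        then obtain B where B: "B \<in> \<B> x" "B \<subseteq> U" by blast
        have "z \<in> X closure_of B" using zc B by blast
        then have "\<forall>T. z \<in> T \<and> openin X T \<longrightarrow> (\<exists>y. y \<in> B \<and> y \<in> T)"
          unfolding in_closure_of by (rule conjunct2)
        then obtain y where "y \<in> B" "y \<in> V" using UV(2,4) by blast
        then show ?thesis using B by blast
      qed
      then show "?P x z" using zt Atop x by blast
    next
      assume p: "?P x z"
      have "z \<in> X closure_of B" if B: "B \<in> \<B> x" for B
      proof -
        have "openin X B" "x \<in> B" using lb1[OF B] by auto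
        then have "\<forall>T. z \<in> T \<and> openin X T \<longrightarrow> (\<exists>y. y \<in> B \<and> y \<in> T)"
          using p by blast
        then show ?thesis using p unfolding in_closure_of by (intro conjI) auto
      qed
      then show "z \<in> (\<Inter>B\<in>\<B> x. X closure_of B)" by blast
    qed
  qed
  have R: "z \<in> \<Union>{M. finitely_non_hausdorff X M \<and> x \<in> M} \<longleftrightarrow> ?P x z" for x z
  proof
    assume "z \<in> \<Union>{M. finitely_non_hausdorff X M \<and> x \<in> M}"
    then obtain M where Mf: "finitely_non_hausdorff X M" and Mxz: "x \<in> M" "z \<in> M" by blast
    have "finitely_non_hausdorff X {x,z}" by (rule fnh_subset[OF Mf]) (use Mxz in auto)
    then show "?P x z" unfolding fnh_pair .
  next
    assume "?P x z"
    then have "finitely_non_hausdorff X {x,z}" unfolding fnh_pair .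
    then show "z \<in> \<Union>{M. finitely_non_hausdorff X M \<and> x \<in> M}" by blast
  qed
  have R2: "\<Union>{M. finitely_non_hausdorff X M \<and> x \<in> M} = \<Union>{M. maximal_finitely_non_hausdorff X M \<and> x \<in> M}" for x
  proof
    show "\<Union>{M. finitely_non_hausdorff X M \<and> x \<in> M} \<subseteq> \<Union>{M. maximal_finitely_non_hausdorff X M \<and> x \<in> M}"
    proof
      fix z assume "z \<in> \<Union>{M. finitely_non_hausdorff X M \<and> x \<in> M}"
      then obtain M where M: "finitely_non_hausdorff X M" "x \<in> M" "z \<in> M" by blast
      then obtain N where "maximal_finitely_non_hausdorff X N" "M \<subseteq> N" using fnh_extend by blast
      then show "z \<in> \<Union>{M. maximal_finitely_non_hausdorff X M \<and> x \<in> M}" using M by blast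
    qed
    show "\<Union>{M. maximal_finitely_non_hausdorff X M \<and> x \<in> M} \<subseteq> \<Union>{M. finitely_non_hausdorff X M \<and> x \<in> M}"
      unfolding maximal_finitely_non_hausdorff_def by blast
  qed
  have E1: "(\<Inter>B\<in>\<B> x. X closure_of B) = \<Union>{M. finitely_non_hausdorff X M \<and> x \<in> M}"
    if x: "x \<in> A" for x
  proof (rule set_eqI)
    fix z
    show "z \<in> (\<Inter>B\<in>\<B> x. X closure_of B) \<longleftrightarrow> z \<in> \<Union>{M. finitely_non_hausdorff X M \<and> x \<in> M}"
      by (rule trans[OF L[OF x] sym[OF R]])
  qed
  have "(\<Inter>x\<in>A. \<Inter>B\<in>\<B> x. X closure_of B) = (\<Inter>x\<in>A. \<Union>{M. finitely_non_hausdorff X M \<and> x \<in> M})"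
    by (rule INF_cong[OF refl E1])
  moreover have "(\<Inter>x\<in>A. \<Union>{M. finitely_non_hausdorff X M \<and> x \<in> M})
           = (\<Inter>x\<in>A. \<Union>{M. maximal_finitely_non_hausdorff X M \<and> x \<in> M})"
    by (rule INF_cong[OF refl R2])
  ultimately show ?thesis by (rule conjI)
qed

end
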